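(* Let $(\mathfrak g,[\cdot,\cdot],\varepsilon,B)$ be a quadratic color Lie algebra and let $\theta$ be an even, invertible, $B$-symmetric element of the centroid of $\mathfrak g$. Define $[x,y]_1^\theta=[\theta(x),y]$, $[x,y]_2^\theta=[\theta(x),\theta(y)]$ and $B_\theta(x,y)=B(\theta(x),y)$. Then $(\mathfrak g,[\cdot,\cdot]_1^\theta,\theta,\varepsilon,B_\theta)$ and $(\mathfrak g,[\cdot,\cdot]_2^\theta,\theta,\varepsilon,B_\theta)$ are quadratic color Hom-Lie algebras.
   Context: $\mathbb K$ is a field of characteristic zero and $\Gamma$ an abelian group. A bicharacter is a map $\varepsilon:\Gamma\times\Gamma\to\mathbb K\setminus\{0\}$ with $\varepsilon(a,b)\varepsilon(b,a)=1$, $\varepsilon(a,b+c)=\varepsilon(a,b)\varepsilon(a,c)$, $\varepsilon(a+b,c)=\varepsilon(a,c)\varepsilon(b,c)$; for homogeneous $x,y$, $\varepsilon(x,y)$ means $\varepsilon(\deg x,\deg y)$. A color Hom-Lie algebra $(\mathfrak g,[\cdot,\cdot],\alpha,\varepsilon)$ is a $\Gamma$-graded vector space with even (degree-preserving) bilinear bracket and even linear $\alpha$ such that $[x,y]=-\varepsilon(x,y)[y,x]$ and $\varepsilon(z,x)[\alpha(x),[y,z]]+\varepsilon(x,y)[\alpha(y),[z,x]]+\varepsilon(y,z)[\alpha(z),[x,y]]=0$ for homogeneous $x,y,z$; a color Lie algebra $(\mathfrak g,[\cdot,\cdot],\varepsilon)$ is the case $\alpha=\mathrm{id}$. A color Hom-Lie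 algebra is quadratic, written $(\mathfrak g,[\cdot,\cdot],\alpha,\varepsilon,B)$, if $B$ is a nondegenerate bilinear form which is $\varepsilon$-symmetric ($B(x,y)=\varepsilon(x,y)B(y,x)$), invariant ($B([x,y],z)=B(x,[y,z])$), and $B(\alpha(x),y)=B(x,\alpha(y))$; a quadratic color Lie algebra is the case $\alpha=\mathrm{id}$. The centroid consists of linear maps $\theta$ with $\theta([x,y])=[\theta(x),y]=\varepsilon(\theta,x)[x,\theta(y)]$; $\theta$ is $B$-symmetric if $B(\theta(x),y)=B(x,\theta(y))$. *)

theory Defs
  imports Main "HOL.Vector_Spaces"
begin

definition bicharacter :: "('g::ab_group_add \<Rightarrow> 'g \<Rightarrow> 'k::field) \<Rightarrow> bool" where
  "bicharacter eps \<longleftrightarrow>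
     (\<forall>a b. eps a b \<noteq> 0) \<and>
     (\<forall>a b. eps a b * eps b a = 1) \<and>
     (\<forall>a b c. eps a (b + c) = eps a b * eps a c) \<and>
     (\<forall>a b c. eps (a + b) c = eps a c * eps b c)"

definition graded_space :: "('k::field \<Rightarrow> 'v::ab_group_add \<Rightarrow> 'v) \<Rightarrow> ('g \<Rightarrow> 'v set) \<Rightarrow> bool" where
  "graded_space scale G \<longleftrightarrow>
     module scale \<and>
     (\<forall>a. 0 \<in> G a \<and> (\<forall>x\<in>G a. \<forall>y\<in>G a. x + y \<in> G a) \<and> (\<forall>c. \<forall>x\<in>G a. scale c x \<in> G a)) \<and>
     (\<forall>v. \<exists>!c :: 'g \<Rightarrow> 'v. finite {a. c a \<noteq> 0} \<and> (\<forall>a. c a \<in> G a) \<and>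
            v = sum c {a. c a \<noteq> 0})"

definition even_bilinear :: "('k::field \<Rightarrow> 'v::ab_group_add \<Rightarrow> 'v) \<Rightarrow> ('g::ab_group_add \<Rightarrow> 'v set)
    \<Rightarrow> ('v \<Rightarrow> 'v \<Rightarrow> 'v) \<Rightarrow> bool" where
  "even_bilinear scale G br \<longleftrightarrow>
     (\<forall>x. Vector_Spaces.linear scale scale (br x)) \<and>
     (\<forall>y. Vector_Spaces.linear scale scale (\<lambda>x. br x y)) \<and>
     (\<forall>a b x y. x \<in> G a \<longrightarrow> y \<in> G b \<longrightarrow> br x y \<in> G (a + b))"

definition even_linear :: "('k::field \<Rightarrow> 'v::ab_group_add \<Rightarrow> 'v) \<Rightarrow> ('g \<Rightarrow> 'v set)
    \<Rightarrow> ('v \<Rightarrow> 'v) \<Rightarrow> bool" where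
  "even_linear scale G f \<longleftrightarrow>
     Vector_Spaces.linear scale scale f \<and> (\<forall>a x. x \<in> G a \<longrightarrow> f x \<in> G a)"

definition color_hom_lie :: "('k::field \<Rightarrow> 'v::ab_group_add \<Rightarrow> 'v) \<Rightarrow> ('g::ab_group_add \<Rightarrow> 'v set)
    \<Rightarrow> ('v \<Rightarrow> 'v \<Rightarrow> 'v) \<Rightarrow> ('v \<Rightarrow> 'v) \<Rightarrow> ('g \<Rightarrow> 'g \<Rightarrow> 'k) \<Rightarrow> bool" where
  "color_hom_lie scale G br alpha eps \<longleftrightarrow>
     graded_space scale G \<and> bicharacter eps \<and>
     even_bilinear scale G br \<and> even_linear scale G alpha \<and>
     (\<forall>a b x y. x \<in> G a \<longrightarrow> y \<in> G b \<longrightarrow> br x y = - scale (eps a b) (br y x)) \<and>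
     (\<forall>a b c x y z. x \<in> G a \<longrightarrow> y \<in> G b \<longrightarrow> z \<in> G c \<longrightarrow>
        scale (eps c a) (br (alpha x) (br y z)) + scale (eps a b) (br (alpha y) (br z x))
          + scale (eps b c) (br (alpha z) (br x y)) = 0)"

definition color_lie :: "('k::field \<Rightarrow> 'v::ab_group_add \<Rightarrow> 'v) \<Rightarrow> ('g::ab_group_add \<Rightarrow> 'v set)
    \<Rightarrow> ('v \<Rightarrow> 'v \<Rightarrow> 'v) \<Rightarrow> ('g \<Rightarrow> 'g \<Rightarrow> 'k) \<Rightarrow> bool" where
  "color_lie scale G br eps \<longleftrightarrow> color_hom_lie scale G br id eps"

definition quadratic_color_hom_lie :: "('k::field \<Rightarrow> 'v::ab_group_add \<Rightarrow> 'v) \<Rightarrow> ('g::ab_group_add \<Rightarrow> 'v set)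
    \<Rightarrow> ('v \<Rightarrow> 'v \<Rightarrow> 'v) \<Rightarrow> ('v \<Rightarrow> 'v) \<Rightarrow> ('g \<Rightarrow> 'g \<Rightarrow> 'k) \<Rightarrow> ('v \<Rightarrow> 'v \<Rightarrow> 'k) \<Rightarrow> bool" where
  "quadratic_color_hom_lie scale G br alpha eps B \<longleftrightarrow>
     color_hom_lie scale G br alpha eps \<and>
     (\<forall>x. Vector_Spaces.linear scale ((*) :: 'k \<Rightarrow> 'k \<Rightarrow> 'k) (B x)) \<and>
     (\<forall>y. Vector_Spaces.linear scale ((*) :: 'k \<Rightarrow> 'k \<Rightarrow> 'k) (\<lambda>x. B x y)) \<and>
     (\<forall>x. (\<forall>y. B x y = 0) \<longrightarrow> x = 0) \<and>
     (\<forall>a b x y. x \<in> G a \<longrightarrow> y \<in> G b \<longrightarrow> B x y = eps a b * B y x) \<and>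
     (\<forall>x y z. B (br x y) z = B x (br y z)) \<and>
     (\<forall>x y. B (alpha x) y = B x (alpha y))"

definition quadratic_color_lie :: "('k::field \<Rightarrow> 'v::ab_group_add \<Rightarrow> 'v) \<Rightarrow> ('g::ab_group_add \<Rightarrow> 'v set)
    \<Rightarrow> ('v \<Rightarrow> 'v \<Rightarrow> 'v) \<Rightarrow> ('g \<Rightarrow> 'g \<Rightarrow> 'k) \<Rightarrow> ('v \<Rightarrow> 'v \<Rightarrow> 'k) \<Rightarrow> bool" where
  "quadratic_color_lie scale G br eps B \<longleftrightarrow> quadratic_color_hom_lie scale G br id eps B"

definition centroid_hom :: "('k::field \<Rightarrow> 'v::ab_group_add \<Rightarrow> 'v) \<Rightarrow> ('g::ab_group_add \<Rightarrow> 'v set)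
    \<Rightarrow> ('v \<Rightarrow> 'v \<Rightarrow> 'v) \<Rightarrow> ('g \<Rightarrow> 'g \<Rightarrow> 'k) \<Rightarrow> 'g \<Rightarrow> ('v \<Rightarrow> 'v) \<Rightarrow> bool" where
  "centroid_hom scale G br eps d theta \<longleftrightarrow>
     Vector_Spaces.linear scale scale theta \<and>
     (\<forall>a x. x \<in> G a \<longrightarrow> theta x \<in> G (a + d)) \<and>
     (\<forall>a b x y. x \<in> G a \<longrightarrow> y \<in> G b \<longrightarrow>
        theta (br x y) = br (theta x) y \<and> br (theta x) y = scale (eps d a) (br x (theta y)))"

definition even_centroid :: "('k::field \<Rightarrow> 'v::ab_group_add \<Rightarrow> 'v) \<Rightarrow> ('g::ab_group_add \<Rightarrow> 'v set)
    \<Rightarrow> ('v \<Rightarrow> 'v \<Rightarrow> 'v) \<Rightarrow> ('g \<Rightarrow> 'g \<Rightarrow> 'k) \<Rightarrow> ('v \<Rightarrow> 'v) \<Rightarrow> bool" where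
  "even_centroid scale G br eps theta \<longleftrightarrow> centroid_hom scale G br eps 0 theta"

end

theory Submission
  imports Defs
begin

lemma graded_ext:
  fixes f g :: "'v::ab_group_add \<Rightarrow> 'w::ab_group_add" and G :: "'g \<Rightarrow> 'v set"
    and scale :: "'k::field \<Rightarrow> 'v \<Rightarrow> 'v"
  assumes gs: "graded_space scale G"
    and fa: "\<And>x y. f (x + y) = f x + f y"
    and ga: "\<And>x y. g (x + y) = g x + g y"
    and h: "\<And>a x. x \<in> G a \<Longrightarrow> f x = g x"
  shows "f v = g v"
proof -
  from gs obtain c :: "'g \<Rightarrow> 'v" where c: "finite {a. c a \<noteq> 0}" "\<forall>a. c a \<in> G a"
     "v = sum c {a. c a \<noteq> 0}"
    unfolding graded_space_def by meson
  have f0: "f 0 = 0" using fa[of 0 0] by simp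
  have g0: "g 0 = 0" using ga[of 0 0] by simp
  have "\<And>S. finite S \<Longrightarrow> f (sum c S) = g (sum c S)"
  proof -
    fix S :: "'g set" assume "finite S"
    then show "f (sum c S) = g (sum c S)"
    proof (induction S rule: finite_induct)
      case empty then show ?case by (simp add: f0 g0)
    next
      case (insert a S)
      then show ?case using h[of "c a" a] c(2) by (simp add: fa ga)
    qed
  qed
  then show ?thesis using c by metis
qed

theorem mainTheorem4:
  fixes scale :: "'k::field_char_0 \<Rightarrow> 'v::ab_group_add \<Rightarrow> 'v"
    and G :: "'g::ab_group_add \<Rightarrow> 'v set"
    and br :: "'v \<Rightarrow> 'v \<Rightarrow> 'v"
    and eps :: "'g \<Rightarrow> 'g \<Rightarrow> 'k"
    and B :: "'v \<Rightarrow> 'v \<Rightarrow> 'k"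
    and theta :: "'v \<Rightarrow> 'v"
  assumes "quadratic_color_lie scale G br eps B"
    and "even_centroid scale G br eps theta"
    and "bij theta"
    and "\<forall>x y. B (theta x) y = B x (theta y)"
  shows "quadratic_color_hom_lie scale G (\<lambda>x y. br (theta x) y) theta eps (\<lambda>x y. B (theta x) y)
       \<and> quadratic_color_hom_lie scale G (\<lambda>x y. br (theta x) (theta y)) theta eps (\<lambda>x y. B (theta x) y)"
proof -
  note Q = assms(1)[unfolded quadratic_color_lie_def quadratic_color_hom_lie_def color_hom_lie_def]
  note C = assms(2)[unfolded even_centroid_def centroid_hom_def]
  have gs: "graded_space scale G" using Q by (elim conjE) assumption
  have bic: "bicharacter eps" using Q by (elim conjE) assumption
  have eb: "even_bilinear scale G br" using Q by (elim conjE) assumption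
  have mod: "module scale" using gs unfolding graded_space_def by (elim conjE) assumption
  have vs: "vector_space scale" using mod by (simp add: vector_space_def module_def)
  have skew0: "\<forall>a b x y. x \<in> G a \<longrightarrow> y \<in> G b \<longrightarrow> br x y = - scale (eps a b) (br y x)"
    using Q by (elim conjE) assumption
  note skew = skew0[rule_format]
  have jac0: "\<forall>a b c x y z. x \<in> G a \<longrightarrow> y \<in> G b \<longrightarrow> z \<in> G c \<longrightarrow>
        scale (eps c a) (br (id x) (br y z)) + scale (eps a b) (br (id y) (br z x))
          + scale (eps b c) (br (id z) (br x y)) = 0"
    using Q by (elim conjE) assumption
  have jac: "\<And>a b c x y z. x \<in> G a \<Longrightarrow> y \<in> G b \<Longrightarrow> z \<in> G c \<Longrightarrow>
        scale (eps c a) (br x (br y z)) + scale (eps a b) (br y (br z x))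
          + scale (eps b c) (br z (br x y)) = 0"
    using jac0 unfolding id_def by blast
  have Blin1: "\<forall>x. Vector_Spaces.linear scale ((*) :: 'k \<Rightarrow> 'k \<Rightarrow> 'k) (B x)" using Q by (elim conjE) assumption
  have Blin2: "\<forall>y. Vector_Spaces.linear scale ((*) :: 'k \<Rightarrow> 'k \<Rightarrow> 'k) (\<lambda>x. B x y)" using Q by (elim conjE) assumption
  have Bnd: "\<forall>x. (\<forall>y. B x y = 0) \<longrightarrow> x = 0" using Q by (elim conjE) assumption
  have Bsym0: "\<forall>a b x y. x \<in> G a \<longrightarrow> y \<in> G b \<longrightarrow> B x y = eps a b * B y x" using Q by (elim conjE) assumption
  note Bsym = Bsym0[rule_format]
  have Binv0: "\<forall>x y z. B (br x y) z = B x (br y z)" using Q by (elim conjE) assumption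
  note Binv = Binv0[rule_format]
  have Bth: "\<And>x y. B (theta x) y = B x (theta y)" using assms(4) by blast
  have thlin: "Vector_Spaces.linear scale scale theta" using C by blast
  have thadd: "\<And>x y. theta (x + y) = theta x + theta y" using thlin by (simp add: linear_iff)
  have thsc: "\<And>c x. theta (scale c x) = scale c (theta x)" using thlin by (simp add: linear_iff)
  have th0: "theta 0 = 0" using thadd[of 0 0] by simp
  have thneg: "\<And>x. theta (- x) = - theta x" using thadd th0 by (metis add.right_inverse add_eq_0_iff)
  have thG: "\<And>a x. x \<in> G a \<Longrightarrow> theta x \<in> G a" using C by (metis add.right_neutral)
  have brlin1: "\<And>x. Vector_Spaces.linear scale scale (br x)" using eb unfolding even_bilinear_def by blast
  have brlin2: "\<And>y. Vector_Spaces.linear scale scale (\<lambda>x. br x y)" using eb unfolding even_bilinear_def by blast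
  have brG: "\<And>a b x y. x \<in> G a \<Longrightarrow> y \<in> G b \<Longrightarrow> br x y \<in> G (a + b)" using eb unfolding even_bilinear_def by blast
  have bradd1: "\<And>x y z. br x (y + z) = br x y + br x z" using brlin1 by (simp add: linear_iff)
  have bradd2: "\<And>x y z. br (x + y) z = br x z + br y z" using brlin2 by (simp add: linear_iff)
  have brsc1: "\<And>x c y. br x (scale c y) = scale c (br x y)" using brlin1 by (simp add: linear_iff)
  have brsc2: "\<And>x c y. br (scale c x) y = scale c (br x y)" using brlin2 by (simp add: linear_iff)
  have eps0: "\<And>a. eps 0 a = 1"
  proof -
    fix a
    have "eps (0 + 0) a = eps 0 a * eps 0 a" "eps 0 a \<noteq> 0" using bic unfolding bicharacter_def by blast+
    then show "eps 0 a = 1" by simp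
  qed
  have hom: "\<And>a b x y. x \<in> G a \<Longrightarrow> y \<in> G b \<Longrightarrow>
        theta (br x y) = br (theta x) y \<and> br (theta x) y = br x (theta y)"
    using C eps0 mod by (simp add: module.scale_one)
  have genA: "\<And>x y. theta (br x y) = br (theta x) y"
  proof -
    fix x y
    have "\<And>a x. x \<in> G a \<Longrightarrow> theta (br x y) = br (theta x) y"
    proof -
      fix a x assume xa: "x \<in> G a"
      show "theta (br x y) = br (theta x) y"
        by (rule graded_ext[OF gs, where f="\<lambda>y. theta (br x y)" and g="\<lambda>y. br (theta x) y"])
           (auto simp: thadd bradd1 hom[OF xa])
    qed
    then show "theta (br x y) = br (theta x) y"
      by (rule graded_ext[OF gs, where f="\<lambda>x. theta (br x y)" and g="\<lambda>x. br (theta x) y", rotated 2])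
         (auto simp: thadd bradd2)
  qed
  have genB: "\<And>x y. br (theta x) y = br x (theta y)"
  proof -
    fix x y
    have "\<And>a x. x \<in> G a \<Longrightarrow> br (theta x) y = br x (theta y)"
    proof -
      fix a x assume xa: "x \<in> G a"
      show "br (theta x) y = br x (theta y)"
        by (rule graded_ext[OF gs, where f="\<lambda>y. br (theta x) y" and g="\<lambda>y. br x (theta y)"])
           (auto simp: thadd bradd1 hom[OF xa])
    qed
    then show "br (theta x) y = br x (theta y)"
      by (rule graded_ext[OF gs, where f="\<lambda>x. br (theta x) y" and g="\<lambda>x. br x (theta y)", rotated 2])
         (auto simp: thadd bradd2)
  qed
  have R1: "\<And>x y. br (theta x) y = theta (br x y)" using genA by simp
  have R2: "\<And>x y. br x (theta y) = theta (br x y)" using genA genB by simp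
  have inj: "inj theta" using assms(3) bij_is_inj by blast
  have eoth: "even_linear scale G theta" unfolding even_linear_def using thlin thG by blast
  have commonB:
    "(\<forall>x. Vector_Spaces.linear scale ((*) :: 'k \<Rightarrow> 'k \<Rightarrow> 'k) (B (theta x))) \<and>
     (\<forall>y. Vector_Spaces.linear scale ((*) :: 'k \<Rightarrow> 'k \<Rightarrow> 'k) (\<lambda>x. B (theta x) y)) \<and>
     (\<forall>x. (\<forall>y. B (theta x) y = 0) \<longrightarrow> x = 0) \<and>
     (\<forall>a b x y. x \<in> G a \<longrightarrow> y \<in> G b \<longrightarrow> B (theta x) y = eps a b * B (theta y) x) \<and>
     (\<forall>x y. B (theta (theta x)) y = B (theta x) (theta y))"
  proof (intro conjI allI impI)
    fix x show "Vector_Spaces.linear scale ((*) :: 'k \<Rightarrow> 'k \<Rightarrow> 'k) (B (theta x))" using Blin1 by blast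
  next
    fix y show "Vector_Spaces.linear scale ((*) :: 'k \<Rightarrow> 'k \<Rightarrow> 'k) (\<lambda>x. B (theta x) y)"
      using Blin2[rule_format, of y] by (simp add: linear_iff thadd thsc)
  next
    fix x assume "\<forall>y. B (theta x) y = 0"
    then have "theta x = 0" using Bnd by blast
    then show "x = 0" using inj th0 by (metis injD)
  next
    fix a b x y assume "x \<in> G a" "y \<in> G b"
    then show "B (theta x) y = eps a b * B (theta y) x" using Bsym[of "theta x" a y b] thG Bth by simp
  next
    fix x y show "B (theta (theta x)) y = B (theta x) (theta y)" using Bth by simp
  qed
  note cB = commonB[THEN conjunct1] commonB[THEN conjunct2, THEN conjunct1]
    commonB[THEN conjunct2, THEN conjunct2, THEN conjunct1]
    commonB[THEN conjunct2, THEN conjunct2, THEN conjunct2, THEN conjunct1]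
    commonB[THEN conjunct2, THEN conjunct2, THEN conjunct2, THEN conjunct2]
  show ?thesis
  proof (intro conjI)
    show "quadratic_color_hom_lie scale G (\<lambda>x y. br (theta x) y) theta eps (\<lambda>x y. B (theta x) y)"
      unfolding quadratic_color_hom_lie_def color_hom_lie_def
    proof (intro conjI)
      show "even_bilinear scale G (\<lambda>x y. br (theta x) y)"
        unfolding even_bilinear_def
      proof (intro conjI allI impI)
        fix x show "Vector_Spaces.linear scale scale (br (theta x))" using brlin1 by blast
      next
        fix y show "Vector_Spaces.linear scale scale (\<lambda>x. br (theta x) y)"
          unfolding linear_iff using vs by (simp add: thadd thsc bradd2 brsc2)
      next
        fix a b x y assume "x \<in> G a" "y \<in> G b"
        then show "br (theta x) y \<in> G (a + b)" using brG thG by blast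
      qed
      show "\<forall>a b x y. x \<in> G a \<longrightarrow> y \<in> G b \<longrightarrow>
         br (theta x) y = - scale (eps a b) (br (theta y) x)"
      proof (intro allI impI)
        fix a b x y assume h: "x \<in> G a" "y \<in> G b"
        show "br (theta x) y = - scale (eps a b) (br (theta y) x)"
          by (simp only: R1 skew[OF h] thsc) (simp add: thneg thsc)
      qed
      show "\<forall>a b c x y z. x \<in> G a \<longrightarrow> y \<in> G b \<longrightarrow> z \<in> G c \<longrightarrow>
        scale (eps c a) (br (theta (theta x)) (br (theta y) z)) + scale (eps a b) (br (theta (theta y)) (br (theta z) x))
          + scale (eps b c) (br (theta (theta z)) (br (theta x) y)) = 0"
      proof (intro allI impI)
        fix a b c x y z assume h: "x \<in> G a" "y \<in> G b" "z \<in> G c"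
        have e: "\<And>u v w. br (theta (theta u)) (br (theta v) w) = theta (theta (theta (br u (br v w))))"
          by (simp only: R1 R2)
        have "theta (theta (theta (scale (eps c a) (br x (br y z)) + scale (eps a b) (br y (br z x))
          + scale (eps b c) (br z (br x y))))) = 0" using jac[OF h] th0 by simp
        then show "scale (eps c a) (br (theta (theta x)) (br (theta y) z)) + scale (eps a b) (br (theta (theta y)) (br (theta z) x))
          + scale (eps b c) (br (theta (theta z)) (br (theta x) y)) = 0"
          by (simp only: e thadd thsc)
      qed
      show "\<forall>x y z. B (theta (br (theta x) y)) z = B (theta x) (br (theta y) z)"
      proof (intro allI)
        fix x y z
        have "B (theta x) (br (theta y) z) = B (theta x) (theta (br y z))" by (simp only: R1)
        also have "\<dots> = B (theta (theta x)) (br y z)" by (simp only: Bth)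
        also have "\<dots> = B (br (theta (theta x)) y) z" by (simp only: Binv)
        also have "\<dots> = B (theta (br (theta x) y)) z" by (simp only: R1)
        finally show "B (theta (br (theta x) y)) z = B (theta x) (br (theta y) z)" by simp
      qed
    qed (fact gs bic eoth cB)+
    show "quadratic_color_hom_lie scale G (\<lambda>x y. br (theta x) (theta y)) theta eps (\<lambda>x y. B (theta x) y)"
      unfolding quadratic_color_hom_lie_def color_hom_lie_def
    proof (intro conjI)
      show "even_bilinear scale G (\<lambda>x y. br (theta x) (theta y))"
        unfolding even_bilinear_def
      proof (intro conjI allI impI)
        fix x show "Vector_Spaces.linear scale scale (\<lambda>y. br (theta x) (theta y))"
          unfolding linear_iff using vs by (simp add: thadd thsc bradd1 brsc1)
      next
        fix y show "Vector_Spaces.linear scale scale (\<lambda>x. br (theta x) (theta y))"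
          unfolding linear_iff using vs by (simp add: thadd thsc bradd2 brsc2)
      next
        fix a b x y assume "x \<in> G a" "y \<in> G b"
        then show "br (theta x) (theta y) \<in> G (a + b)" using brG thG by blast
      qed
      show "\<forall>a b x y. x \<in> G a \<longrightarrow> y \<in> G b \<longrightarrow>
         br (theta x) (theta y) = - scale (eps a b) (br (theta y) (theta x))"
      proof (intro allI impI)
        fix a b x y assume h: "x \<in> G a" "y \<in> G b"
        show "br (theta x) (theta y) = - scale (eps a b) (br (theta y) (theta x))"
          by (simp only: R1 R2 skew[OF h] thsc) (simp add: thneg thsc)
      qed
      show "\<forall>a b c x y z. x \<in> G a \<longrightarrow> y \<in> G b \<longrightarrow> z \<in> G c \<longrightarrow>
        scale (eps c a) (br (theta (theta x)) (theta (br (theta y) (theta z)))) + scale (eps a b) (br (theta (theta y)) (theta (br (theta z) (theta x))))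
          + scale (eps b c) (br (theta (theta z)) (theta (br (theta x) (theta y)))) = 0"
      proof (intro allI impI)
        fix a b c x y z assume h: "x \<in> G a" "y \<in> G b" "z \<in> G c"
        have e: "\<And>u v w. br (theta (theta u)) (theta (br (theta v) (theta w))) = theta (theta (theta (theta (theta (br u (br v w))))))"
          by (simp only: R1 R2)
        have "theta (theta (theta (theta (theta (scale (eps c a) (br x (br y z)) + scale (eps a b) (br y (br z x))
          + scale (eps b c) (br z (br x y))))))) = 0" using jac[OF h] th0 by simp
        then show "scale (eps c a) (br (theta (theta x)) (theta (br (theta y) (theta z)))) + scale (eps a b) (br (theta (theta y)) (theta (br (theta z) (theta x))))
          + scale (eps b c) (br (theta (theta z)) (theta (br (theta x) (theta y)))) = 0"
          by (simp only: e thadd thsc)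
      qed
      show "\<forall>x y z. B (theta (br (theta x) (theta y))) z = B (theta x) (br (theta y) (theta z))"
      proof (intro allI)
        fix x y z
        have "B (theta x) (br (theta y) (theta z)) = B (theta x) (theta (theta (br y z)))" by (simp only: R1 R2)
        also have "\<dots> = B (theta (theta (theta x))) (br y z)" by (simp only: Bth)
        also have "\<dots> = B (br (theta (theta (theta x))) y) z" by (simp only: Binv)
        also have "\<dots> = B (theta (br (theta x) (theta y))) z" by (simp only: R1 R2)
        finally show "B (theta (br (theta x) (theta y))) z = B (theta x) (br (theta y) (theta z))" by simp
      qed
    qed (fact gs bic eoth cB)+
  qed
qed

end
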